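(* Let $n\geq 2$ and fix $I\sqcup J=[2,n]$. There is at most one $\sigma\in S_n$ such that $A^\sigma_{[2,n],\emptyset}=A^{\mathrm{id}}_{I,J}$.
   Context: Let $w_{ij}$, $1\leq i,j\leq n$, be formal variables subject only to $w_{ij}+w_{ji}=0$. Let $[2,n]=\{2,\dots,n\}$. For $\sigma\in S_n$ and a disjoint decomposition $I\sqcup J=[2,n]$, set $$A^\sigma_{I,J}:=\sum_{i\in I}\sum_{\ell=1}^{i-1}w_{\sigma(\ell)\sigma(i)}-\sum_{j\in J}\sum_{\ell=1}^{j-1}w_{\sigma(\ell)\sigma(j)}.$$ *)

theory Defs
  imports "HOL-Combinatorics.Permutations" "HOL-Library.Function_Algebras"
begin

text \<open>The formal variables w_ij with the sole relation w_ij + w_ji = 0 generate the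
free abelian group with basis the w_ab for a < b.  We represent an element of it by its
coefficient function on pairs (a,b) (only pairs with a < b carry nonzero coefficients).
The diagonal variables w_aa never occur in the expressions below.\<close>

definition wvar :: "nat \<Rightarrow> nat \<Rightarrow> (nat \<times> nat \<Rightarrow> int)" where
  "wvar a b = (\<lambda>p. if a < b \<and> p = (a, b) then 1
                   else if b < a \<and> p = (b, a) then -1 else 0)"

definition Aexpr :: "(nat \<Rightarrow> nat) \<Rightarrow> nat set \<Rightarrow> nat set \<Rightarrow> (nat \<times> nat \<Rightarrow> int)" where
  "Aexpr \<sigma> I J =
     (\<Sum>i\<in>I. \<Sum>l\<in>{1..<i}. wvar (\<sigma> l) (\<sigma> i))
   - (\<Sum>j\<in>J. \<Sum>l\<in>{1..<j}. wvar (\<sigma> l) (\<sigma> j))"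

end

theory Submission
  imports Defs
begin

lemma sum_fun_apply: "(sum f A) x = (\<Sum>i\<in>A. f i x)"
  by (induction A rule: infinite_finite_induct) auto

lemma inner: "(\<Sum>l\<in>{1..<i::nat}. if l = x \<and> i = y then (1::int) else 0) = (if i = y \<and> 1 \<le> x \<and> x < i then 1 else 0)"
  by (cases "i = y") (simp_all add: sum.delta)
lemma outer: "(\<Sum>i\<in>{2..n::nat}. if i = y \<and> 1 \<le> x \<and> x < i then (1::int) else 0) = (if 1 \<le> x \<and> x < y \<and> y \<le> n then 1 else 0)"
proof -
  have "(\<Sum>i\<in>{2..n::nat}. if i = y \<and> 1 \<le> x \<and> x < i then (1::int) else 0) = (\<Sum>i\<in>{2..n::nat}. if i = y then (if 1 \<le> x \<and> x < i then 1 else 0) else 0)"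
    by (intro sum.cong) auto
  also have "\<dots> = (if 1 \<le> x \<and> x < y \<and> y \<le> n then 1 else 0)"
    by (simp add: sum.delta)
  finally show ?thesis .
qed

lemma coef:
  fixes \<sigma> :: "nat \<Rightarrow> nat"
  assumes p: "\<sigma> permutes {1..n}" and ab: "a < b" "a \<in> {1..n}" "b \<in> {1..n}"
  shows "Aexpr \<sigma> {2..n} {} (a,b) = (if inv \<sigma> a < inv \<sigma> b then 1 else -1)"
proof -
  define p where "p = inv \<sigma> a"
  define q where "q = inv \<sigma> b"
  have bij: "bij \<sigma>" using p permutes_bij by blast
  have eqa: "\<sigma> l = a \<longleftrightarrow> l = p" for l
    using bij p_def by (metis bij_inv_eq_iff)
  have eqb: "\<sigma> l = b \<longleftrightarrow> l = q" for l
    using bij q_def by (metis bij_inv_eq_iff)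
  have pS: "p \<in> {1..n}" unfolding p_def by (rule permutes_in_image[OF permutes_inv[OF p], THEN iffD2]) (rule ab(2))
  have qS: "q \<in> {1..n}" unfolding q_def by (rule permutes_in_image[OF permutes_inv[OF p], THEN iffD2]) (rule ab(3))
  have pq: "p \<noteq> q" using eqa eqb ab by force
  have w: "wvar (\<sigma> l) (\<sigma> i) (a,b) = (if l = p \<and> i = q then 1 else 0) - (if l = q \<and> i = p then 1 else 0)" for l i
  proof -
    have A: "(a = \<sigma> l) = (l = p)" "(b = \<sigma> i) = (i = q)" "(a = \<sigma> i) = (i = p)" "(b = \<sigma> l) = (l = q)"
      using eqa eqb by metis+
    have B: "\<sigma> p = a" "\<sigma> q = b" using eqa eqb by blast+
    show ?thesis unfolding wvar_def prod.inject A using ab(1) pq B by auto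
  qed
  have "Aexpr \<sigma> {2..n} {} (a,b) = (\<Sum>i\<in>{2..n}. \<Sum>l\<in>{1..<i}. wvar (\<sigma> l) (\<sigma> i) (a,b))"
    unfolding Aexpr_def by (simp add: sum_fun_apply)
  also have "\<dots> = (if 1 \<le> p \<and> p < q \<and> q \<le> n then 1 else 0) - (if 1 \<le> q \<and> q < p \<and> p \<le> n then 1 else 0)"
    unfolding w sum_subtractf inner outer ..
  also have "\<dots> = (if inv \<sigma> a < inv \<sigma> b then 1 else -1)"
    using pS qS pq unfolding p_def[symmetric] q_def[symmetric] by auto
  finally show ?thesis .
qed

lemma card_below:
  fixes f :: "nat \<Rightarrow> nat"
  assumes f: "f permutes {1..n}" and x: "x \<in> {1..n}"
  shows "f x = Suc (card {y\<in>{1..n}. f y < f x})"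
proof -
  have "bij_betw f {y\<in>{1..n}. f y < f x} {k\<in>{1..n}. k < f x}"
  proof -
    have b: "bij_betw f {1..n} {1..n}" using f permutes_imp_bij by blast
    have "f ` {y\<in>{1..n}. f y < f x} = {k\<in>{1..n}. k < f x}"
    proof
      show "f ` {y\<in>{1..n}. f y < f x} \<subseteq> {k\<in>{1..n}. k < f x}" using b by (auto simp: bij_betw_def)
      show "{k\<in>{1..n}. k < f x} \<subseteq> f ` {y\<in>{1..n}. f y < f x}"
      proof
        fix k assume k: "k \<in> {k\<in>{1..n}. k < f x}"
        hence "k \<in> f ` {1..n}" using b unfolding bij_betw_def by simp
        then obtain y where "y \<in> {1..n}" "k = f y" by (rule imageE) simp
        then show "k \<in> f ` {y\<in>{1..n}. f y < f x}" using k by blast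
      qed
    qed
    moreover have "inj_on f {y\<in>{1..n}. f y < f x}"
    proof -
      have "inj_on f {1..n}" using b by (simp add: bij_betw_def)
      then show ?thesis by (rule inj_on_subset) blast
    qed
    ultimately show ?thesis by (simp add: bij_betw_def)
  qed
  hence "card {y\<in>{1..n}. f y < f x} = card {k\<in>{1..n}. k < f x}" by (rule bij_betw_same_card)
  moreover have "f x \<in> {1..n}" using x by (simp only: permutes_in_image[OF f])
  moreover have "{k\<in>{1..n}. k < f x} = {1..<f x}" using \<open>f x \<in> {1..n}\<close> by auto
  ultimately show ?thesis by simp
qed

theorem lemma3p7:
  fixes n :: nat and I J :: "nat set"
  assumes "2 \<le> n" and "I \<inter> J = {}" and "I \<union> J = {2..n}"
  shows "\<forall>\<sigma> \<tau>. \<sigma> permutes {1..n} \<and> Aexpr \<sigma> {2..n} {} = Aexpr id I J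
              \<and> \<tau> permutes {1..n} \<and> Aexpr \<tau> {2..n} {} = Aexpr id I J
              \<longrightarrow> \<sigma> = \<tau>"
proof (intro allI impI)
  fix \<sigma> \<tau> :: "nat \<Rightarrow> nat"
  assume h: "\<sigma> permutes {1..n} \<and> Aexpr \<sigma> {2..n} {} = Aexpr id I J
              \<and> \<tau> permutes {1..n} \<and> Aexpr \<tau> {2..n} {} = Aexpr id I J"
  have ps: "\<sigma> permutes {1..n}" and pt: "\<tau> permutes {1..n}"
    and E: "Aexpr \<sigma> {2..n} {} = Aexpr \<tau> {2..n} {}" using h by auto
  have lt: "inv \<sigma> a < inv \<sigma> b \<longleftrightarrow> inv \<tau> a < inv \<tau> b" if a: "a \<in> {1..n}" "b \<in> {1..n}" for a b
  proof -
    consider "a < b" | "a = b" | "b < a" by linarith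
    then show ?thesis
    proof cases
      case 1
      have "Aexpr \<sigma> {2..n} {} (a,b) = Aexpr \<tau> {2..n} {} (a,b)" using E by simp
      then show ?thesis using coef[OF ps 1 a] coef[OF pt 1 a] by (auto split: if_splits)
    next
      case 3
      have "Aexpr \<sigma> {2..n} {} (b,a) = Aexpr \<tau> {2..n} {} (b,a)" using E by simp
      moreover have "inv \<sigma> a \<noteq> inv \<sigma> b" "inv \<tau> a \<noteq> inv \<tau> b" using 3
        by (metis less_irrefl permutes_inverses(1) ps, metis less_irrefl permutes_inverses(1) pt)
      ultimately show ?thesis using coef[OF ps 3 a(2) a(1)] coef[OF pt 3 a(2) a(1)]
        by (auto split: if_splits)
    qed simp
  qed
  have pis: "inv \<sigma> permutes {1..n}" and pit: "inv \<tau> permutes {1..n}"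
    using ps pt permutes_inv by blast+
  have "inv \<sigma> x = inv \<tau> x" for x
  proof (cases "x \<in> {1..n}")
    case True
    have "{y\<in>{1..n}. inv \<sigma> y < inv \<sigma> x} = {y\<in>{1..n}. inv \<tau> y < inv \<tau> x}"
      using lt True by auto
    then show ?thesis using card_below[OF pis True] card_below[OF pit True] by simp
  next
    case False
    then show ?thesis using pis pit by (simp add: permutes_def)
  qed
  hence "inv \<sigma> = inv \<tau>" by blast
  then show "\<sigma> = \<tau>" using ps pt by (metis permutes_inv_inv)
qed

end
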